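(* Consider the integral block packing algorithm driven by a multidimensional knapsack oracle ALG, producing the integral allocation $x$, and let $\lambda\ge0$. If $ALG^t\ge\lambda\cdot OPT^t$ for every $t$, then for every integral allocation $y$ and every horizon $T$, $SW_{[1:T]}(x)\ge\frac{\lambda}{1+\lambda}SW_{[1:T]}(y)$. Similarly, if $ALG^t\ge\lambda\cdot OPT^{*t}$ for every $t$, then for every fractional allocation $y^*$ and every horizon $T$, $SW_{[1:T]}(x)\ge\frac{\lambda}{1+\lambda}SW_{[1:T]}(y^* )$.
   Context: Online block packing: $m$ resources with capacities $B_j>0$; transactions $i\in\mathcal{C}$ with arrival time $a_i\in\{1,2,\dots\}$, base value $v_i\ge0$, discount $\rho_i\in[0,1]$, demand $w_i\in\mathbb{R}_+^m$; $v_i^t:=v_i(1-\rho_i)^{t-a_i}$. A fractional allocation is $\{x_i^t\}$ with $x_i^t\in[0,1]$, $x_i^t=0$ for $t<a_i$, $\sum_tx_i^t\le1$, and $\sum_iw_{ij}x_i^t\le B_j$ for all $t,j$; integral if all entries are in $\{0,1\}$. $SW_{[1:T]}(x)=\sum_{t=1}^T\sum_ix_i^tv_i^t$. The algorithm: for each $t=1,2,\dots$ let $A_t=\{i:a_i\le t\}$, $S_t=\{i:\exists s<t,\ x_i^s=1\}$, $U_t=A_t\setminus S_t$; the oracle ALG returns a set $\{x_i^t\}_{i\in U_t}\in\{0,1\}$ (with $x_i^t=0$ for $i\notin U_t$) satisfying $\sum_iw_{ij}x_i^t\le B_j$ for all $j$, where transaction $i$ has value $v_i^t$. Let $ALG^t=\sum_ix_i^tv_i^t$,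 let $OPT^t$ be the maximum of $\sum_{i\in U_t}z_iv_i^t$ over $z\in\{0,1\}^{U_t}$ with $\sum_iw_{ij}z_i\le B_j$ for all $j$, and $OPT^{*t}$ the same maximum over $z\in[0,1]^{U_t}$. *)

theory Defs
  imports Main "HOL.Real"
begin

text \<open>Instance: finite transaction set C, resources j < m with capacities B j,
 demands w i j, arrival times a i (>= 1), base values v i, discounts rho i.\<close>

definition tval :: "('i \<Rightarrow> real) \<Rightarrow> ('i \<Rightarrow> real) \<Rightarrow> ('i \<Rightarrow> nat) \<Rightarrow> 'i \<Rightarrow> nat \<Rightarrow> real" where
  "tval v rho a i t = v i * (1 - rho i) ^ (t - a i)"

text \<open>Fractional allocation (times are 1,2,...; since a i >= 1, entries at time 0 vanish).\<close>
definition frac_alloc :: "'i set \<Rightarrow> nat \<Rightarrow> (nat \<Rightarrow> real) \<Rightarrow> ('i \<Rightarrow> nat \<Rightarrow> real)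
    \<Rightarrow> ('i \<Rightarrow> nat) \<Rightarrow> ('i \<Rightarrow> nat \<Rightarrow> real) \<Rightarrow> bool" where
  "frac_alloc C m B w a y \<longleftrightarrow>
     (\<forall>i\<in>C. \<forall>t. 0 \<le> y i t \<and> y i t \<le> 1) \<and>
     (\<forall>i\<in>C. \<forall>t. t < a i \<longrightarrow> y i t = 0) \<and>
     (\<forall>i\<in>C. \<forall>T. (\<Sum>t\<le>T. y i t) \<le> 1) \<and>
     (\<forall>t. \<forall>j<m. (\<Sum>i\<in>C. w i j * y i t) \<le> B j)"

definition int_alloc :: "'i set \<Rightarrow> nat \<Rightarrow> (nat \<Rightarrow> real) \<Rightarrow> ('i \<Rightarrow> nat \<Rightarrow> real)
    \<Rightarrow> ('i \<Rightarrow> nat) \<Rightarrow> ('i \<Rightarrow> nat \<Rightarrow> real) \<Rightarrow> bool" where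
  "int_alloc C m B w a y \<longleftrightarrow> frac_alloc C m B w a y \<and> (\<forall>i\<in>C. \<forall>t. y i t \<in> {0, 1})"

definition SW :: "'i set \<Rightarrow> ('i \<Rightarrow> real) \<Rightarrow> ('i \<Rightarrow> real) \<Rightarrow> ('i \<Rightarrow> nat)
    \<Rightarrow> nat \<Rightarrow> ('i \<Rightarrow> nat \<Rightarrow> real) \<Rightarrow> real" where
  "SW C v rho a T y = (\<Sum>t\<in>{1..T}. \<Sum>i\<in>C. y i t * tval v rho a i t)"

definition Uset :: "'i set \<Rightarrow> ('i \<Rightarrow> nat) \<Rightarrow> ('i \<Rightarrow> nat \<Rightarrow> real) \<Rightarrow> nat \<Rightarrow> 'i set" where
  "Uset C a x t = {i \<in> C. a i \<le> t} - {i \<in> C. \<exists>s\<in>{1..<t}. x i s = 1}"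

definition alg_run :: "'i set \<Rightarrow> nat \<Rightarrow> (nat \<Rightarrow> real) \<Rightarrow> ('i \<Rightarrow> nat \<Rightarrow> real)
    \<Rightarrow> ('i \<Rightarrow> nat) \<Rightarrow> ('i \<Rightarrow> nat \<Rightarrow> real) \<Rightarrow> bool" where
  "alg_run C m B w a x \<longleftrightarrow>
     (\<forall>t\<ge>1. (\<forall>i\<in>C. x i t \<in> {0, 1}) \<and>
            (\<forall>i\<in>C. x i t = 1 \<longrightarrow> i \<in> Uset C a x t) \<and>
            (\<forall>j<m. (\<Sum>i\<in>C. w i j * x i t) \<le> B j))"

definition ALGt :: "'i set \<Rightarrow> ('i \<Rightarrow> real) \<Rightarrow> ('i \<Rightarrow> real) \<Rightarrow> ('i \<Rightarrow> nat)
    \<Rightarrow> ('i \<Rightarrow> nat \<Rightarrow> real) \<Rightarrow> nat \<Rightarrow> real" where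
  "ALGt C v rho a x t = (\<Sum>i\<in>C. x i t * tval v rho a i t)"

text \<open>OPT^t: best integral knapsack value over U_t (z in {0,1}^U_t, i.e. a subset S of U_t).\<close>
definition OPTt :: "'i set \<Rightarrow> nat \<Rightarrow> (nat \<Rightarrow> real) \<Rightarrow> ('i \<Rightarrow> nat \<Rightarrow> real)
    \<Rightarrow> ('i \<Rightarrow> real) \<Rightarrow> ('i \<Rightarrow> real) \<Rightarrow> ('i \<Rightarrow> nat) \<Rightarrow> ('i \<Rightarrow> nat \<Rightarrow> real) \<Rightarrow> nat \<Rightarrow> real" where
  "OPTt C m B w v rho a x t =
     Max {(\<Sum>i\<in>S. tval v rho a i t) | S. S \<subseteq> Uset C a x t \<and>
                                         (\<forall>j<m. (\<Sum>i\<in>S. w i j) \<le> B j)}"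

definition OPTstar :: "'i set \<Rightarrow> nat \<Rightarrow> (nat \<Rightarrow> real) \<Rightarrow> ('i \<Rightarrow> nat \<Rightarrow> real)
    \<Rightarrow> ('i \<Rightarrow> real) \<Rightarrow> ('i \<Rightarrow> real) \<Rightarrow> ('i \<Rightarrow> nat) \<Rightarrow> ('i \<Rightarrow> nat \<Rightarrow> real) \<Rightarrow> nat \<Rightarrow> real" where
  "OPTstar C m B w v rho a x t =
     Sup {(\<Sum>i\<in>Uset C a x t. z i * tval v rho a i t) | z.
            (\<forall>i\<in>Uset C a x t. 0 \<le> z i \<and> z i \<le> 1) \<and>
            (\<forall>j<m. (\<Sum>i\<in>Uset C a x t. w i j * z i) \<le> B j)}"

end

theory Submission
  imports Defs
begin

lemma tval_nn:
  assumes "v i \<ge> 0" "0 \<le> rho i" "rho i \<le> 1"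
  shows "tval v rho a i t \<ge> 0"
  using assms unfolding tval_def by simp

lemma tval_mono:
  assumes "v i \<ge> 0" "0 \<le> rho i" "rho i \<le> 1" "s \<le> t"
  shows "tval v rho a i t \<le> tval v rho a i s"
proof -
  have "(1 - rho i) ^ (t - a i) \<le> (1 - rho i) ^ (s - a i)"
    by (rule power_decreasing) (use assms in auto)
  then show ?thesis unfolding tval_def using assms(1) by (simp add: mult_left_mono)
qed

lemma run_unique:
  assumes run: "alg_run C m B w a x" and i: "i \<in> C"
    and s: "1 \<le> s" "s < s'" "x i s = 1" "x i s' = 1"
  shows False
proof -
  have "1 \<le> s'" using s by auto
  then have "i \<in> Uset C a x s'" using run i s(4) unfolding alg_run_def by blast
  then show False using s unfolding Uset_def by auto
qed

lemma per_item:
  assumes run: "alg_run C m B w a x" and i: "i \<in> C"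
    and vn: "v i \<ge> 0" and r0: "0 \<le> rho i" and r1: "rho i \<le> 1"
    and y0: "\<forall>t. 0 \<le> y i t" and ysum: "\<forall>T. (\<Sum>t\<le>T. y i t) \<le> 1"
  shows "(\<Sum>t\<in>{1..T}. (if \<exists>s\<in>{1..<t}. x i s = 1 then y i t * tval v rho a i t else 0))
         \<le> (\<Sum>t\<in>{1..T}. x i t * tval v rho a i t)"
proof -
  have x01: "\<And>t. t \<ge> 1 \<Longrightarrow> x i t \<in> {0,1}" using run i unfolding alg_run_def by blast
  have tn: "\<And>t. tval v rho a i t \<ge> 0" unfolding tval_def using vn r0 r1 by simp
  have rhs_nn: "\<And>t. t \<in> {1..T} \<Longrightarrow> x i t * tval v rho a i t \<ge> 0"
  proof -
    fix t assume "t \<in> {1..T}"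
    then have "x i t \<in> {0,1}" using x01 by auto
    then show "x i t * tval v rho a i t \<ge> 0" using tn[of t] by auto
  qed
  show ?thesis
  proof (cases "\<exists>s\<in>{1..<T}. x i s = 1")
    case False
    then have "(\<Sum>t\<in>{1..T}. (if \<exists>s\<in>{1..<t}. x i s = 1 then y i t * tval v rho a i t else 0)) = 0"
      by (intro sum.neutral) auto
    also have "0 \<le> (\<Sum>t\<in>{1..T}. x i t * tval v rho a i t)"
      using rhs_nn by (intro sum_nonneg) auto
    finally show ?thesis .
  next
    case True
    then obtain s0 where s0: "s0 \<in> {1..<T}" "x i s0 = 1" by blast
    have s01: "s0 \<ge> 1" using s0 by auto
    have "i \<in> Uset C a x s0" using run i s0(2) s01 unfolding alg_run_def by blast
    then have as0: "a i \<le> s0" unfolding Uset_def by auto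
    have cond: "\<And>t. t \<in> {1..T} \<Longrightarrow> (\<exists>s\<in>{1..<t}. x i s = 1) \<longleftrightarrow> s0 < t"
    proof -
      fix t assume t: "t \<in> {1..T}"
      show "(\<exists>s\<in>{1..<t}. x i s = 1) \<longleftrightarrow> s0 < t"
      proof
        assume "\<exists>s\<in>{1..<t}. x i s = 1"
        then obtain s where s: "s \<in> {1..<t}" "x i s = 1" by blast
        show "s0 < t"
        proof (rule ccontr)
          assume "\<not> s0 < t"
          then have "s < s0" using s by auto
          then show False using run_unique[OF run i, of s s0] s s0 by auto
        qed
      next
        assume "s0 < t" then show "\<exists>s\<in>{1..<t}. x i s = 1" using s0 by auto
      qed
    qed
    have "(\<Sum>t\<in>{1..T}. (if \<exists>s\<in>{1..<t}. x i s = 1 then y i t * tval v rho a i t else 0))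
        = (\<Sum>t\<in>{1..T}. (if s0 < t then y i t * tval v rho a i t else 0))"
      using cond by (intro sum.cong) auto
    also have "\<dots> \<le> (\<Sum>t\<in>{1..T}. (if s0 < t then y i t * tval v rho a i s0 else 0))"
    proof (intro sum_mono)
      fix t assume "t \<in> {1..T}"
      show "(if s0 < t then y i t * tval v rho a i t else 0) \<le> (if s0 < t then y i t * tval v rho a i s0 else 0)"
      proof (cases "s0 < t")
        case True
        have "y i t * tval v rho a i t \<le> y i t * tval v rho a i s0"
          using tval_mono[where v=v and i=i and rho=rho and s=s0 and t=t and a=a, OF vn r0 r1] True y0
          by (intro mult_left_mono) auto
        then show ?thesis using True by simp
      qed simp
    qed
    also have "\<dots> \<le> (\<Sum>t\<le>T. y i t * tval v rho a i s0)"
    proof -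
      have "(\<Sum>t\<in>{1..T}. (if s0 < t then y i t * tval v rho a i s0 else 0))
            \<le> (\<Sum>t\<in>{1..T}. y i t * tval v rho a i s0)"
        using y0 tn by (intro sum_mono) auto
      also have "\<dots> \<le> (\<Sum>t\<le>T. y i t * tval v rho a i s0)"
        using y0 tn by (intro sum_mono2) auto
      finally show ?thesis .
    qed
    also have "\<dots> = (\<Sum>t\<le>T. y i t) * tval v rho a i s0" by (simp add: sum_distrib_right)
    also have "\<dots> \<le> 1 * tval v rho a i s0" using ysum tn by (intro mult_right_mono) auto
    also have "\<dots> = x i s0 * tval v rho a i s0" using s0 by simp
    also have "\<dots> \<le> (\<Sum>t\<in>{1..T}. x i t * tval v rho a i t)"
      using s0 rhs_nn by (intro member_le_sum) auto
    finally show ?thesis .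
  qed
qed

lemma core:
  assumes finC: "finite C" and run: "alg_run C m B w a x" and lamnn: "lam \<ge> 0"
    and vnn: "\<forall>i\<in>C. v i \<ge> 0"
    and rho01: "\<forall>i\<in>C. 0 \<le> rho i \<and> rho i \<le> 1"
    and y0: "\<forall>i\<in>C. \<forall>t. 0 \<le> y i t"
    and ybef: "\<forall>i\<in>C. \<forall>t. t < a i \<longrightarrow> y i t = 0"
    and ysum: "\<forall>i\<in>C. \<forall>T. (\<Sum>t\<le>T. y i t) \<le> 1"
    and per: "\<forall>t\<ge>1. lam * (\<Sum>i\<in>Uset C a x t. y i t * tval v rho a i t) \<le> ALGt C v rho a x t"
  shows "SW C v rho a T x \<ge> lam / (1 + lam) * SW C v rho a T y"
proof -
  define U where "U t = Uset C a x t" for t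
  define P where "P t = {i\<in>C. \<exists>s\<in>{1..<t}. x i s = 1}" for t
  let ?f = "\<lambda>i t. y i t * tval v rho a i t"
  have split: "(\<Sum>i\<in>C. ?f i t) = (\<Sum>i\<in>U t. ?f i t) + (\<Sum>i\<in>C. if \<exists>s\<in>{1..<t}. x i s = 1 then ?f i t else 0)" for t
  proof -
    have UC: "U t \<subseteq> C" unfolding U_def Uset_def by auto
    have "(\<Sum>i\<in>C. ?f i t) = (\<Sum>i\<in>C. (if i \<in> U t then ?f i t else 0) + (if \<exists>s\<in>{1..<t}. x i s = 1 then ?f i t else 0))"
    proof (intro sum.cong refl)
      fix i assume i: "i \<in> C"
      show "?f i t = (if i \<in> U t then ?f i t else 0) + (if \<exists>s\<in>{1..<t}. x i s = 1 then ?f i t else 0)"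
        using ybef i unfolding U_def Uset_def by (cases "a i \<le> t") auto
    qed
    also have "\<dots> = (\<Sum>i\<in>C. if i \<in> U t then ?f i t else 0) + (\<Sum>i\<in>C. if \<exists>s\<in>{1..<t}. x i s = 1 then ?f i t else 0)"
      by (rule sum.distrib)
    also have "(\<Sum>i\<in>C. if i \<in> U t then ?f i t else 0) = (\<Sum>i\<in>U t. ?f i t)"
      using UC finC by (simp add: sum.If_cases Int_absorb1 inf.absorb2)
    finally show ?thesis .
  qed
  have A: "lam * (\<Sum>t\<in>{1..T}. \<Sum>i\<in>U t. ?f i t) \<le> SW C v rho a T x"
  proof -
    have "lam * (\<Sum>t\<in>{1..T}. \<Sum>i\<in>U t. ?f i t) = (\<Sum>t\<in>{1..T}. lam * (\<Sum>i\<in>U t. ?f i t))"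
      by (simp add: sum_distrib_left)
    also have "\<dots> \<le> (\<Sum>t\<in>{1..T}. ALGt C v rho a x t)"
      using per unfolding U_def by (intro sum_mono) auto
    also have "\<dots> = SW C v rho a T x" unfolding ALGt_def SW_def by simp
    finally show ?thesis .
  qed
  have Bp: "(\<Sum>t\<in>{1..T}. \<Sum>i\<in>C. if \<exists>s\<in>{1..<t}. x i s = 1 then ?f i t else 0) \<le> SW C v rho a T x"
  proof -
    have "(\<Sum>t\<in>{1..T}. \<Sum>i\<in>C. if \<exists>s\<in>{1..<t}. x i s = 1 then ?f i t else 0)
        = (\<Sum>i\<in>C. \<Sum>t\<in>{1..T}. if \<exists>s\<in>{1..<t}. x i s = 1 then ?f i t else 0)"
      by (rule sum.swap)
    also have "\<dots> \<le> (\<Sum>i\<in>C. \<Sum>t\<in>{1..T}. x i t * tval v rho a i t)"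
    proof (rule sum_mono)
      fix i assume i: "i \<in> C"
      show "(\<Sum>t\<in>{1..T}. if \<exists>s\<in>{1..<t}. x i s = 1 then ?f i t else 0) \<le> (\<Sum>t\<in>{1..T}. x i t * tval v rho a i t)"
        using per_item[OF run i, of v rho y T] i vnn rho01 y0 ysum by auto
    qed
    also have "\<dots> = SW C v rho a T x" unfolding SW_def by (rule sum.swap)
    finally show ?thesis .
  qed
  have Bq: "0 \<le> (\<Sum>t\<in>{1..T}. \<Sum>i\<in>C. if \<exists>s\<in>{1..<t}. x i s = 1 then ?f i t else 0)"
  proof -
    have tnC: "\<And>i t. i \<in> C \<Longrightarrow> tval v rho a i t \<ge> 0" using vnn rho01 unfolding tval_def by simp
    show ?thesis using y0 tnC by (intro sum_nonneg) simp
  qed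
  have SWy: "SW C v rho a T y = (\<Sum>t\<in>{1..T}. \<Sum>i\<in>U t. ?f i t) + (\<Sum>t\<in>{1..T}. \<Sum>i\<in>C. if \<exists>s\<in>{1..<t}. x i s = 1 then ?f i t else 0)"
    unfolding SW_def using split by (simp add: sum.distrib)
  have "lam * SW C v rho a T y \<le> (1 + lam) * SW C v rho a T x"
  proof -
    have "lam * (\<Sum>t\<in>{1..T}. \<Sum>i\<in>C. if \<exists>s\<in>{1..<t}. x i s = 1 then ?f i t else 0) \<le> lam * SW C v rho a T x"
      using Bp lamnn by (rule mult_left_mono)
    then show ?thesis using A unfolding SWy by (simp add: algebra_simps)
  qed
  then show ?thesis using lamnn by (simp add: field_simps)
qed

theorem lemma3:
  fixes C :: "'i set" and m :: nat and B :: "nat \<Rightarrow> real" and w :: "'i \<Rightarrow> nat \<Rightarrow> real"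
    and a :: "'i \<Rightarrow> nat" and v rho :: "'i \<Rightarrow> real" and x :: "'i \<Rightarrow> nat \<Rightarrow> real"
    and lam :: real
  assumes finC: "finite C"
    and Bpos: "\<forall>j<m. B j > 0"
    and wnn: "\<forall>i\<in>C. \<forall>j<m. w i j \<ge> 0"
    and arr: "\<forall>i\<in>C. a i \<ge> 1"
    and vnn: "\<forall>i\<in>C. v i \<ge> 0"
    and rho01: "\<forall>i\<in>C. 0 \<le> rho i \<and> rho i \<le> 1"
    and run: "alg_run C m B w a x"
    and lamnn: "lam \<ge> 0"
  shows "((\<forall>t\<ge>1. ALGt C v rho a x t \<ge> lam * OPTt C m B w v rho a x t) \<longrightarrow>
           (\<forall>y T. int_alloc C m B w a y \<longrightarrow>
              SW C v rho a T x \<ge> lam / (1 + lam) * SW C v rho a T y))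
       \<and> ((\<forall>t\<ge>1. ALGt C v rho a x t \<ge> lam * OPTstar C m B w v rho a x t) \<longrightarrow>
           (\<forall>y T. frac_alloc C m B w a y \<longrightarrow>
              SW C v rho a T x \<ge> lam / (1 + lam) * SW C v rho a T y))"
proof (intro conjI impI allI)
  fix y T
  assume H: "\<forall>t\<ge>1. ALGt C v rho a x t \<ge> lam * OPTt C m B w v rho a x t"
    and ia: "int_alloc C m B w a y"
  have fa: "frac_alloc C m B w a y" using ia unfolding int_alloc_def by auto
  have y01: "\<forall>i\<in>C. \<forall>t. y i t \<in> {0,1}" using ia unfolding int_alloc_def by auto
  show "SW C v rho a T x \<ge> lam / (1 + lam) * SW C v rho a T y"
  proof (rule core[OF finC run lamnn vnn rho01])
    show "\<forall>i\<in>C. \<forall>t. 0 \<le> y i t" "\<forall>i\<in>C. \<forall>t. t < a i \<longrightarrow> y i t = 0"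
      "\<forall>i\<in>C. \<forall>T. (\<Sum>t\<le>T. y i t) \<le> 1" using fa unfolding frac_alloc_def by auto
    show "\<forall>t\<ge>1. lam * (\<Sum>i\<in>Uset C a x t. y i t * tval v rho a i t) \<le> ALGt C v rho a x t"
    proof (intro allI impI)
      fix t :: nat assume t: "t \<ge> 1"
      define U where "U = Uset C a x t"
      have UC: "U \<subseteq> C" unfolding U_def Uset_def by auto
      have finU: "finite U" using UC finC finite_subset by auto
      define S where "S = {i\<in>U. y i t = 1}"
      have SU: "S \<subseteq> U" unfolding S_def by auto
      have eq: "(\<Sum>i\<in>U. y i t * tval v rho a i t) = (\<Sum>i\<in>S. tval v rho a i t)"
      proof -
        have "(\<Sum>i\<in>U. y i t * tval v rho a i t) = (\<Sum>i\<in>U. if y i t = 1 then tval v rho a i t else 0)"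
          using y01 UC by (intro sum.cong) auto
        also have "\<dots> = (\<Sum>i\<in>S. tval v rho a i t)"
          unfolding S_def using finU by (simp add: sum.inter_filter)
        finally show ?thesis .
      qed
      have feas: "\<forall>j<m. (\<Sum>i\<in>S. w i j) \<le> B j"
      proof (intro allI impI)
        fix j assume j: "j < m"
        have "(\<Sum>i\<in>S. w i j) = (\<Sum>i\<in>U. w i j * y i t)"
        proof -
          have "(\<Sum>i\<in>U. w i j * y i t) = (\<Sum>i\<in>U. if y i t = 1 then w i j else 0)"
            using y01 UC by (intro sum.cong) auto
          also have "\<dots> = (\<Sum>i\<in>S. w i j)"
            unfolding S_def using finU by (simp add: sum.inter_filter)
          finally show ?thesis by simp
        qed
        also have "\<dots> \<le> (\<Sum>i\<in>C. w i j * y i t)"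
          using UC finC wnn j fa unfolding frac_alloc_def by (intro sum_mono2) (auto intro!: mult_nonneg_nonneg)
        also have "\<dots> \<le> B j" using fa j unfolding frac_alloc_def by auto
        finally show "(\<Sum>i\<in>S. w i j) \<le> B j" .
      qed
      have fin: "finite {(\<Sum>i\<in>S. tval v rho a i t) | S. S \<subseteq> U \<and> (\<forall>j<m. (\<Sum>i\<in>S. w i j) \<le> B j)}"
      proof -
        have "{(\<Sum>i\<in>S. tval v rho a i t) | S. S \<subseteq> U \<and> (\<forall>j<m. (\<Sum>i\<in>S. w i j) \<le> B j)}
              \<subseteq> (\<lambda>S. \<Sum>i\<in>S. tval v rho a i t) ` Pow U" by auto
        then show ?thesis using finU finite_subset by blast
      qed
      have "(\<Sum>i\<in>U. y i t * tval v rho a i t) \<le> OPTt C m B w v rho a x t"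
        unfolding OPTt_def U_def[symmetric] eq
        by (rule Max_ge[OF fin]) (use SU feas in blast)
      then have "lam * (\<Sum>i\<in>U. y i t * tval v rho a i t) \<le> lam * OPTt C m B w v rho a x t"
        using lamnn by (rule mult_left_mono)
      then show "lam * (\<Sum>i\<in>Uset C a x t. y i t * tval v rho a i t) \<le> ALGt C v rho a x t"
        using H t unfolding U_def by fastforce
    qed
  qed
next
  fix y T
  assume H: "\<forall>t\<ge>1. ALGt C v rho a x t \<ge> lam * OPTstar C m B w v rho a x t"
    and fa: "frac_alloc C m B w a y"
  show "SW C v rho a T x \<ge> lam / (1 + lam) * SW C v rho a T y"
  proof (rule core[OF finC run lamnn vnn rho01])
    show "\<forall>i\<in>C. \<forall>t. 0 \<le> y i t" "\<forall>i\<in>C. \<forall>t. t < a i \<longrightarrow> y i t = 0"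
      "\<forall>i\<in>C. \<forall>T. (\<Sum>t\<le>T. y i t) \<le> 1" using fa unfolding frac_alloc_def by auto
    show "\<forall>t\<ge>1. lam * (\<Sum>i\<in>Uset C a x t. y i t * tval v rho a i t) \<le> ALGt C v rho a x t"
    proof (intro allI impI)
      fix t :: nat assume t: "t \<ge> 1"
      define U where "U = Uset C a x t"
      have UC: "U \<subseteq> C" unfolding U_def Uset_def by auto
      have finU: "finite U" using UC finC finite_subset by auto
      let ?X = "{(\<Sum>i\<in>U. z i * tval v rho a i t) | z.
            (\<forall>i\<in>U. 0 \<le> z i \<and> z i \<le> 1) \<and> (\<forall>j<m. (\<Sum>i\<in>U. w i j * z i) \<le> B j)}"
      have feas: "\<forall>j<m. (\<Sum>i\<in>U. w i j * y i t) \<le> B j"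
      proof (intro allI impI)
        fix j assume j: "j < m"
        have "(\<Sum>i\<in>U. w i j * y i t) \<le> (\<Sum>i\<in>C. w i j * y i t)"
          using UC finC wnn j fa unfolding frac_alloc_def by (intro sum_mono2) auto
        also have "\<dots> \<le> B j" using fa j unfolding frac_alloc_def by auto
        finally show "(\<Sum>i\<in>U. w i j * y i t) \<le> B j" .
      qed
      have mem: "(\<Sum>i\<in>U. y i t * tval v rho a i t) \<in> ?X"
      proof -
        have "\<forall>i\<in>U. 0 \<le> y i t \<and> y i t \<le> 1" using fa UC unfolding frac_alloc_def by blast
        then show ?thesis using feas by (intro CollectI exI[of _ "\<lambda>i. y i t"]) simp
      qed
      have bdd: "bdd_above ?X"
      proof (rule bdd_aboveI)
        fix r assume "r \<in> ?X"
        then obtain z where z: "r = (\<Sum>i\<in>U. z i * tval v rho a i t)" "\<forall>i\<in>U. 0 \<le> z i \<and> z i \<le> 1"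
          by blast
        have "r \<le> (\<Sum>i\<in>U. \<bar>tval v rho a i t\<bar>)"
          unfolding z(1)
        proof (rule sum_mono)
          fix i assume "i \<in> U"
          then have "0 \<le> z i" "z i \<le> 1" using z by auto
          then have "z i * \<bar>tval v rho a i t\<bar> \<le> 1 * \<bar>tval v rho a i t\<bar>"
            by (intro mult_right_mono) auto
          then have "\<bar>z i * tval v rho a i t\<bar> \<le> 1 * \<bar>tval v rho a i t\<bar>"
            using \<open>0 \<le> z i\<close> by (simp add: abs_mult)
          then show "z i * tval v rho a i t \<le> \<bar>tval v rho a i t\<bar>" by simp
        qed
        then show "r \<le> (\<Sum>i\<in>U. \<bar>tval v rho a i t\<bar>)" .
      qed
      have "(\<Sum>i\<in>U. y i t * tval v rho a i t) \<le> OPTstar C m B w v rho a x t"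
        unfolding OPTstar_def U_def[symmetric]
        by (rule cSup_upper[OF mem bdd])
      then have "lam * (\<Sum>i\<in>U. y i t * tval v rho a i t) \<le> lam * OPTstar C m B w v rho a x t"
        using lamnn by (rule mult_left_mono)
      then show "lam * (\<Sum>i\<in>Uset C a x t. y i t * tval v rho a i t) \<le> ALGt C v rho a x t"
        using H t unfolding U_def by fastforce
    qed
  qed
qed

end
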